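(* Let $\Sigma=\{1,\square,h,s,t\}$ and let $Z$ be the string rewriting system over $\Sigma$ with the seven rules $h11\to 1h$, $11h\square \to 11s\square$, $1s\to s1$, $\square s\to \square h$, $h1\square \to t11\square$, $1t\to t111$, $\square t\to\square h$. There is no dimension $d\geq 1$ and no family of affine maps $[\sigma](x)=M_\sigma x+v_\sigma$ ($\sigma\in\Sigma$, $M_\sigma\in\mathbb{N}^{d\times d}$, $v_\sigma\in\mathbb{N}^d$) such that every $[\sigma]$ is strictly monotone with respect to $>$ (i.e. $x>y$ implies $[\sigma](x)>[\sigma](y)$), for at least one rule $\ell\to r$ of $Z$ we have $[\ell](x)>[r](x)$ for all $x\in\mathbb{N}^d$, and for every remaining rule $\ell'\to r'$ of $Z$ we have $[\ell'](x)\gtrsim[r'](x)$ for all $x\in\mathbb{N}^d$.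
   Context: Strings are finite words over $\Sigma$; the interpretation is extended to strings by $[s_1 s_2\cdots s_n]=[s_1]\circ[s_2]\circ\cdots\circ[s_n]$ (the empty string being the identity). On $\mathbb{N}^d$: $x>y$ iff $x_1>y_1$ and $x_i\geq y_i$ for all $i\in\{2,\dots,d\}$; $x\gtrsim y$ iff $x_i\geq y_i$ for all $i$. *)

theory Defs
  imports Main
begin

datatype sym = One | Box | H | S | T

text \<open>Vectors in N^d are represented as functions nat => nat, only indices < d matter.
  Index 0 plays the role of the first coordinate x_1.\<close>

definition gtv :: "nat \<Rightarrow> (nat \<Rightarrow> nat) \<Rightarrow> (nat \<Rightarrow> nat) \<Rightarrow> bool" where
  "gtv d x y \<longleftrightarrow> x 0 > y 0 \<and> (\<forall>i. 1 \<le> i \<and> i < d \<longrightarrow> x i \<ge> y i)"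

definition gev :: "nat \<Rightarrow> (nat \<Rightarrow> nat) \<Rightarrow> (nat \<Rightarrow> nat) \<Rightarrow> bool" where
  "gev d x y \<longleftrightarrow> (\<forall>i<d. x i \<ge> y i)"

definition aff :: "nat \<Rightarrow> (nat \<Rightarrow> nat \<Rightarrow> nat) \<Rightarrow> (nat \<Rightarrow> nat) \<Rightarrow> (nat \<Rightarrow> nat) \<Rightarrow> (nat \<Rightarrow> nat)" where
  "aff d M v x = (\<lambda>i. if i < d then (\<Sum>j<d. M i j * x j) + v i else 0)"

definition interp :: "nat \<Rightarrow> (sym \<Rightarrow> nat \<Rightarrow> nat \<Rightarrow> nat) \<Rightarrow> (sym \<Rightarrow> nat \<Rightarrow> nat)
    \<Rightarrow> sym list \<Rightarrow> (nat \<Rightarrow> nat) \<Rightarrow> (nat \<Rightarrow> nat)" where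
  "interp d M v w = foldr (\<lambda>\<sigma> f. aff d (M \<sigma>) (v \<sigma>) \<circ> f) w id"

definition Z :: "(sym list \<times> sym list) list" where
  "Z = [ ([H, One, One], [One, H]),
         ([One, One, H, Box], [One, One, S, Box]),
         ([One, S], [S, One]),
         ([Box, S], [Box, H]),
         ([H, One, Box], [T, One, One, Box]),
         ([One, T], [T, One, One, One]),
         ([Box, T], [Box, H]) ]"

end

theory Submission imports Defs Complex_Main begin

lemma interp_Nil[simp]: "interp d M v [] = id"
  by (simp add: interp_def)

lemma interp_Cons[simp]: "interp d M v (s # w) = aff d (M s) (v s) \<circ> interp d M v w"
  by (simp add: interp_def)

lemma interp_append: "interp d M v (u @ w) x = interp d M v u (interp d M v w x)"
  by (induction u) auto

lemma gev_refl: "gev d x x" by (simp add: gev_def)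
lemma gev_trans: "gev d x y \<Longrightarrow> gev d y z \<Longrightarrow> gev d x z"
  unfolding gev_def using le_trans by blast
lemma gtv_gev: "gtv d x y \<Longrightarrow> gev d x y"
  unfolding gtv_def gev_def
proof (intro allI impI)
  fix i assume h: "y 0 < x 0 \<and> (\<forall>i. 1 \<le> i \<and> i < d \<longrightarrow> y i \<le> x i)" "i < d"
  show "y i \<le> x i" proof (cases "i = 0")
    case True then show ?thesis using h by simp
  next
    case False then show ?thesis using h by simp
  qed
qed
lemma gtv_gev_trans: "d \<ge> 1 \<Longrightarrow> gtv d x y \<Longrightarrow> gev d y z \<Longrightarrow> gtv d x z"
  unfolding gtv_def gev_def
  apply (intro conjI allI impI)
   apply (drule spec[of _ 0]; simp)
  apply (erule conjE, drule spec, drule spec, auto intro: le_trans)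
  done
lemma gev_gtv_trans: "d \<ge> 1 \<Longrightarrow> gev d x y \<Longrightarrow> gtv d y z \<Longrightarrow> gtv d x z"
  unfolding gtv_def gev_def
  apply (intro conjI allI impI)
   apply (drule spec[of _ 0]; simp)
  apply (erule conjE, drule spec, drule spec, auto intro: le_trans)
  done

lemma aff_gev: "gev d x y \<Longrightarrow> gev d (aff d A c x) (aff d A c y)"
  unfolding gev_def aff_def by (auto intro!: sum_mono mult_left_mono)

lemma interp_gev: "gev d x y \<Longrightarrow> gev d (interp d M v u x) (interp d M v u y)"
  by (induction u) (auto intro: aff_gev)

lemma interp_gtv:
  assumes "\<forall>\<sigma> x y. gtv d x y \<longrightarrow> gtv d (aff d (M \<sigma>) (v \<sigma>) x) (aff d (M \<sigma>) (v \<sigma>) y)"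
  shows "gtv d x y \<Longrightarrow> gtv d (interp d M v u x) (interp d M v u y)"
  using assms by (induction u) auto

lemma nat_incsub: fixes s :: "nat \<Rightarrow> nat" shows "\<exists>r. strict_mono r \<and> incseq (\<lambda>n. s (r n))"
proof -
  obtain r where r: "strict_mono r" "monoseq (\<lambda>n. s (r n))" using seq_monosub by blast
  show ?thesis
  proof (cases "incseq (\<lambda>n. s (r n))")
    case True then show ?thesis using r by blast
  next
    case False
    then have dec: "decseq (\<lambda>n. s (r n))" using r(2) by (simp add: monoseq_iff)
    define vm where "vm = (LEAST y. \<exists>n. y = s (r n))"
    have "\<exists>n. vm = s (r n)" unfolding vm_def by (rule LeastI[of "\<lambda>y. \<exists>n. y = s (r n)" "s (r 0)"]) blast
    then obtain N where N: "s (r N) = vm" by auto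
    have mn: "vm \<le> s (r n)" for n unfolding vm_def by (rule Least_le) blast
    have const: "s (r (n + N)) = vm" for n
    proof -
      have "s (r (n + N)) \<le> s (r N)" using dec unfolding decseq_def by simp
      then show ?thesis using N mn[of "n+N"] by simp
    qed
    have "strict_mono (\<lambda>n. r (n + N))" using r(1) by (simp add: strict_mono_def)
    moreover have "incseq (\<lambda>n. s (r (n + N)))" using const by (simp add: incseq_def)
    ultimately show ?thesis by blast
  qed
qed

lemma dickson: fixes f :: "nat \<Rightarrow> 'k \<Rightarrow> nat"
  assumes "finite F" shows "\<exists>g. strict_mono g \<and> (\<forall>k\<in>F. incseq (\<lambda>n. f (g n) k))"
  using assms
proof (induction F rule: finite_induct)
  case empty then show ?case by (rule exI[of _ "\<lambda>n. n"]) (simp add: strict_mono_def)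
next
  case (insert k F)
  from insert.IH obtain g where g: "strict_mono g" "\<forall>k\<in>F. incseq (\<lambda>n. f (g n) k)" by blast
  obtain r where r: "strict_mono r" "incseq (\<lambda>n. f (g (r n)) k)" using nat_incsub[of "\<lambda>n. f (g n) k"] by blast
  have "strict_mono (\<lambda>n. g (r n))" using g(1) r(1) by (simp add: strict_mono_def)
  moreover have "\<forall>k'\<in>F. incseq (\<lambda>n. f (g (r n)) k')"
  proof
    fix k' assume "k' \<in> F"
    then have "incseq (\<lambda>n. f (g n) k')" using g by blast
    then show "incseq (\<lambda>n. f (g (r n)) k')" using r(1)
      by (simp add: incseq_def strict_mono_less_eq)
  qed
  ultimately have "strict_mono (\<lambda>n. g (r n)) \<and> (\<forall>k'\<in>insert k F. incseq (\<lambda>n. f (g (r n)) k'))"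
    using r(2) by blast
  then show ?case by blast
qed

lemma gev_def2: "gev d x y = (\<forall>i<d. y i \<le> x i)" by (simp add: gev_def)

fun Lp :: "nat \<Rightarrow> (nat \<Rightarrow> nat \<Rightarrow> nat) \<Rightarrow> nat \<Rightarrow> nat \<Rightarrow> nat \<Rightarrow> nat" where
  "Lp d A 0 i j = (if i = j then 1 else 0)"
| "Lp d A (Suc n) i j = (\<Sum>l<d. A i l * Lp d A n l j)"

fun cp :: "nat \<Rightarrow> (nat \<Rightarrow> nat \<Rightarrow> nat) \<Rightarrow> (nat \<Rightarrow> nat) \<Rightarrow> nat \<Rightarrow> nat \<Rightarrow> nat" where
  "cp d A c 0 i = 0"
| "cp d A c (Suc n) i = (\<Sum>l<d. A i l * cp d A c n l) + c i"

lemma rep_aff: "i < d \<Longrightarrow> interp d M v (replicate n s) x i =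
   (\<Sum>j<d. Lp d (M s) n i j * x j) + cp d (M s) (v s) n i"
proof (induction n arbitrary: i)
  case 0
  have "(\<Sum>j<d. (if i = j then 1 else 0) * x j) = (\<Sum>j<d. if i = j then x j else 0)"
    by (rule sum.cong) auto
  also have "\<dots> = x i" using 0 by (simp add: sum.delta)
  finally show ?case by simp
next
  case (Suc n)
  have "interp d M v (replicate (Suc n) s) x i = (\<Sum>l<d. M s i l * interp d M v (replicate n s) x l) + v s i"
    using Suc.prems by (simp add: aff_def)
  also have "\<dots> = (\<Sum>l<d. M s i l * ((\<Sum>j<d. Lp d (M s) n l j * x j) + cp d (M s) (v s) n l)) + v s i"
    by (rule arg_cong[where f="\<lambda>t. t + v s i"], rule sum.cong) (simp_all add: Suc.IH)
  also have "\<dots> = (\<Sum>l<d. \<Sum>j<d. M s i l * Lp d (M s) n l j * x j) + (\<Sum>l<d. M s i l * cp d (M s) (v s) n l) + v s i"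
    by (simp add: distrib_left sum.distrib sum_distrib_left mult.assoc)
  also have "(\<Sum>l<d. \<Sum>j<d. M s i l * Lp d (M s) n l j * x j) = (\<Sum>j<d. \<Sum>l<d. M s i l * Lp d (M s) n l j * x j)"
    by (rule sum.swap)
  also have "\<dots> = (\<Sum>j<d. Lp d (M s) (Suc n) i j * x j)"
    by (simp add: sum_distrib_right)
  finally show ?case by simp
qed

lemma rep_le:
  assumes "\<forall>a<d. \<forall>b<d. Lp d (M s) n a b \<le> Lp d (M s) m a b"
    and "\<forall>a<d. cp d (M s) (v s) n a \<le> cp d (M s) (v s) m a"
  shows "gev d (interp d M v (replicate m s) x) (interp d M v (replicate n s) x)"
  unfolding gev_def
proof (intro allI impI)
  fix a assume a: "a < d"
  have "(\<Sum>j<d. Lp d (M s) n a j * x j) \<le> (\<Sum>j<d. Lp d (M s) m a j * x j)"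
    using assms(1) a by (intro sum_mono mult_right_mono) auto
  then show "interp d M v (replicate n s) x a \<le> interp d M v (replicate m s) x a"
    using assms(2) a by (simp add: rep_aff add_mono)
qed

lemma rep2: "replicate (n + 2) x = replicate n x @ [x, x]"
  by (simp only: replicate_add) (simp add: numeral_2_eq_2)

lemma rep_snoc1[simp]: "replicate n x @ [x] = x # replicate n x"
  by (rule replicate_append_same)
lemma rep_snoc2[simp]: "replicate n x @ [x, x] = x # x # replicate n x"
  by (induction n) auto
lemma rep_snoc2'[simp]: "replicate n x @ x # x # ys = x # x # replicate n x @ ys"
  by (induction n) auto
lemma rep_snoc1'[simp]: "replicate n x @ x # ys = x # replicate n x @ ys"
  by (induction n) auto

lemma replicate_add_interp: "interp d M v (replicate (a + b) s) x = interp d M v (replicate a s) (interp d M v (replicate b s) x)"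
  by (simp add: replicate_add interp_append)

locale Zint =
  fixes d :: nat and M :: "sym \<Rightarrow> nat \<Rightarrow> nat \<Rightarrow> nat" and v :: "sym \<Rightarrow> nat \<Rightarrow> nat"
    and rho :: "sym list \<times> sym list"
  assumes d1: "d \<ge> 1"
    and mono: "\<forall>\<sigma> x y. gtv d x y \<longrightarrow> gtv d (aff d (M \<sigma>) (v \<sigma>) x) (aff d (M \<sigma>) (v \<sigma>) y)"
    and rin: "rho \<in> set Z"
    and strict: "\<forall>x. gtv d (interp d M v (fst rho) x) (interp d M v (snd rho) x)"
    and weak: "\<forall>r\<in>set Z. r \<noteq> rho \<longrightarrow> (\<forall>x. gev d (interp d M v (fst r) x) (interp d M v (snd r) x))"
begin

definition R :: "bool \<Rightarrow> sym list \<Rightarrow> sym list \<Rightarrow> bool" where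
  "R b u w \<longleftrightarrow> (\<forall>x. gev d (interp d M v u x) (interp d M v w x)) \<and>
     (b \<longrightarrow> (\<forall>x. gtv d (interp d M v u x) (interp d M v w x)))"

lemma R_rule: "r \<in> set Z \<Longrightarrow> R (r = rho) (fst r) (snd r)"
  using strict weak gtv_gev unfolding R_def by metis

lemma R_ctx: "R b u w \<Longrightarrow> R b (p @ u @ q) (p @ w @ q)"
  unfolding R_def interp_append using interp_gev interp_gtv[OF mono] by blast

lemma R_trans: "R b1 u w \<Longrightarrow> R b2 w z \<Longrightarrow> R (b1 \<or> b2) u z"
  unfolding R_def using gev_trans gtv_gev_trans[OF d1] gev_gtv_trans[OF d1] by blast

lemma R_chain: "R b1 u w \<Longrightarrow> R b2 w' z \<Longrightarrow> w = w' \<Longrightarrow> u' = u \<Longrightarrow> z' = z \<Longrightarrow> (b \<Longrightarrow> b1 \<or> b2) \<Longrightarrow> R b u' z'"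
  using R_trans unfolding R_def by blast

lemma R_refl: "R False u u" unfolding R_def by (simp add: gev_refl)

lemma R_cong: "R b u w \<Longrightarrow> u = u' \<Longrightarrow> w = w' \<Longrightarrow> (b' \<Longrightarrow> b) \<Longrightarrow> R b' u' w'"
  unfolding R_def by blast

abbreviation "b1 \<equiv> (([H, One, One], [One, H]) = rho)"
abbreviation "b2 \<equiv> (([One, One, H, Box], [One, One, S, Box]) = rho)"
abbreviation "b3 \<equiv> (([One, S], [S, One]) = rho)"
abbreviation "b4 \<equiv> (([Box, S], [Box, H]) = rho)"
abbreviation "b5 \<equiv> (([H, One, Box], [T, One, One, Box]) = rho)"
abbreviation "b6 \<equiv> (([One, T], [T, One, One, One]) = rho)"
abbreviation "b7 \<equiv> (([Box, T], [Box, H]) = rho)"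

lemma R1: "R b1 [H, One, One] [One, H]" using R_rule[of "([H, One, One], [One, H])"] by (simp add: Z_def)
lemma R2: "R b2 [One, One, H, Box] [One, One, S, Box]" using R_rule[of "([One, One, H, Box], [One, One, S, Box])"] by (simp add: Z_def)
lemma R3: "R b3 [One, S] [S, One]" using R_rule[of "([One, S], [S, One])"] by (simp add: Z_def)
lemma R4: "R b4 [Box, S] [Box, H]" using R_rule[of "([Box, S], [Box, H])"] by (simp add: Z_def)
lemma R5: "R b5 [H, One, Box] [T, One, One, Box]" using R_rule[of "([H, One, Box], [T, One, One, Box])"] by (simp add: Z_def)
lemma R6: "R b6 [One, T] [T, One, One, One]" using R_rule[of "([One, T], [T, One, One, One])"] by (simp add: Z_def)
lemma R7: "R b7 [Box, T] [Box, H]" using R_rule[of "([Box, T], [Box, H])"] by (simp add: Z_def)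

lemma hk: "R (0 < k \<and> b1) (H # replicate (2*k) One) (replicate k One @ [H])"
proof (induction k)
  case 0 show ?case by (rule R_cong[OF R_refl]) simp_all
next
  case (Suc k)
  have s1: "R b1 ([] @ [H, One, One] @ replicate (2*k) One) ([] @ [One, H] @ replicate (2*k) One)"
    by (rule R_ctx[OF R1])
  have s2: "R (0 < k \<and> b1) ([One] @ (H # replicate (2*k) One) @ []) ([One] @ (replicate k One @ [H]) @ [])"
    by (rule R_ctx[OF Suc.IH])
  show ?case by (rule R_chain[OF s1 s2]) (simp_all add: replicate_append_same)
qed

lemma sk: "R (0 < k \<and> b3) (replicate k One @ [S]) (S # replicate k One)"
proof (induction k)
  case 0 show ?case by (rule R_cong[OF R_refl]) simp_all
next
  case (Suc k)
  have s1: "R b3 (replicate k One @ [One, S] @ []) (replicate k One @ [S, One] @ [])"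
    by (rule R_ctx[OF R3])
  have s2: "R (0 < k \<and> b3) ([] @ (replicate k One @ [S]) @ [One]) ([] @ (S # replicate k One) @ [One])"
    by (rule R_ctx[OF Suc.IH])
  show ?case by (rule R_chain[OF s1 s2]) (simp_all add:)
qed

lemma tk: "R (0 < k \<and> b6) (replicate k One @ [T]) (T # replicate (3*k) One)"
proof (induction k)
  case 0 show ?case by (rule R_cong[OF R_refl]) simp_all
next
  case (Suc k)
  have s1: "R b6 (replicate k One @ [One, T] @ []) (replicate k One @ [T, One, One, One] @ [])"
    by (rule R_ctx[OF R6])
  have s2: "R (0 < k \<and> b6) ([] @ (replicate k One @ [T]) @ [One, One, One]) ([] @ (T # replicate (3*k) One) @ [One, One, One])"
    by (rule R_ctx[OF Suc.IH])
  have e: "replicate (3 + 3 * k) One = replicate (3*k) One @ [One, One, One]"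
  proof -
    have "3 + 3 * k = 3*k + 3" by simp
    then show ?thesis by (simp only: replicate_add) (simp add: numeral_eq_Suc)
  qed
  show ?case by (rule R_chain[OF s1 s2]) (simp_all add: e)
qed

definition W :: "nat \<Rightarrow> sym list" where "W n = Box # H # replicate n One @ [Box]"


lemma even_step:
  assumes "2 \<le> k"
  shows "R (b1 \<or> b2 \<or> b3 \<or> b4) (W (2*k)) (W k)"
proof -
  obtain j where kj: "k = Suc (Suc j)" using assms by (metis add_2_eq_Suc le_Suc_ex)
  have s1: "R (0 < k \<and> b1) ([Box] @ (H # replicate (2*k) One) @ [Box]) ([Box] @ (replicate k One @ [H]) @ [Box])"
    by (rule R_ctx[OF hk])
  have s2: "R b2 ((Box # replicate j One) @ [One, One, H, Box] @ []) ((Box # replicate j One) @ [One, One, S, Box] @ [])"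
    by (rule R_ctx[OF R2])
  have s3: "R (0 < k \<and> b3) ([Box] @ (replicate k One @ [S]) @ [Box]) ([Box] @ (S # replicate k One) @ [Box])"
    by (rule R_ctx[OF sk])
  have s4: "R b4 ([] @ [Box, S] @ (replicate k One @ [Box])) ([] @ [Box, H] @ (replicate k One @ [Box]))"
    by (rule R_ctx[OF R4])
  have "k = j + 2" using kj by simp
  then have e1: "replicate k One = replicate j One @ [One, One]" by (simp only: rep2)
  have t12: "R (b1 \<or> b2) ([Box] @ (H # replicate (2*k) One) @ [Box]) ((Box # replicate j One) @ [One, One, S, Box] @ [])"
    by (rule R_chain[OF s1 s2]) (simp_all add: e1 kj)
  have t123: "R (b1 \<or> b2 \<or> b3) ([Box] @ (H # replicate (2*k) One) @ [Box]) ([Box] @ (S # replicate k One) @ [Box])"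
    by (rule R_chain[OF t12 s3]) (simp_all add: e1 kj)
  show ?thesis
    by (rule R_chain[OF t123 s4]) (simp_all add: W_def)
qed

lemma odd_step:
  assumes "1 \<le> k"
  shows "R (b1 \<or> b5 \<or> b6 \<or> b7) (W (2*k+1)) (W (3*k+2))"
proof -
  have s1: "R (0 < k \<and> b1) ([Box] @ (H # replicate (2*k) One) @ [One, Box]) ([Box] @ (replicate k One @ [H]) @ [One, Box])"
    by (rule R_ctx[OF hk])
  have s2: "R b5 ((Box # replicate k One) @ [H, One, Box] @ []) ((Box # replicate k One) @ [T, One, One, Box] @ [])"
    by (rule R_ctx[OF R5])
  have s3: "R (0 < k \<and> b6) ([Box] @ (replicate k One @ [T]) @ [One, One, Box]) ([Box] @ (T # replicate (3*k) One) @ [One, One, Box])"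
    by (rule R_ctx[OF tk])
  have s4: "R b7 ([] @ [Box, T] @ (replicate (3*k) One @ [One, One, Box])) ([] @ [Box, H] @ (replicate (3*k) One @ [One, One, Box]))"
    by (rule R_ctx[OF R7])
  have t12: "R (b1 \<or> b5) ([Box] @ (H # replicate (2*k) One) @ [One, Box]) ((Box # replicate k One) @ [T, One, One, Box] @ [])"
    using assms by (intro R_chain[OF s1 s2]) auto
  have t123: "R (b1 \<or> b5 \<or> b6) ([Box] @ (H # replicate (2*k) One) @ [One, Box]) ([Box] @ (T # replicate (3*k) One) @ [One, One, Box])"
    using assms by (intro R_chain[OF t12 s3]) auto
  have e1: "replicate (2*k+1) One = replicate (2*k) One @ [One]"
    by (simp add:)
  have e2: "replicate (3*k+2) One = replicate (3*k) One @ [One, One]"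
    by (simp only: rep2)
  show ?thesis
    by (rule R_chain[OF t123 s4]) (simp_all add: W_def e1 e2 assms)
qed

lemma chain:
  shows "R True (W (8*j + 6)) (W (9*j + 8))"
proof -
  have o1: "R (b1 \<or> b2 \<or> b3 \<or> b4) (W (2*(4*j+3))) (W (4*j+3))"
    by (rule even_step) simp
  have o2: "R (b1 \<or> b5 \<or> b6 \<or> b7) (W (2*(2*j+1)+1)) (W (3*(2*j+1)+2))"
    by (rule odd_step) simp
  have o3: "R (b1 \<or> b5 \<or> b6 \<or> b7) (W (2*(3*j+2)+1)) (W (3*(3*j+2)+2))"
    by (rule odd_step) simp
  have eq: "2*(4*j+3) = 8*j+6" "2*(2*j+1)+1 = 4*j+3" "3*(2*j+1)+2 = 6*j+5"
     "2*(3*j+2)+1 = 6*j+5" "3*(3*j+2)+2 = 9*j+8" by simp_all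
  have s1: "R (b1 \<or> b2 \<or> b3 \<or> b4) (W (8*j+6)) (W (4*j+3))" using o1 unfolding eq .
  have s2: "R (b1 \<or> b5 \<or> b6 \<or> b7) (W (4*j+3)) (W (6*j+5))" using o2 unfolding eq .
  have s3: "R (b1 \<or> b5 \<or> b6 \<or> b7) (W (6*j+5)) (W (9*j+8))" using o3 unfolding eq .
  have all: "b1 \<or> b2 \<or> b3 \<or> b4 \<or> b5 \<or> b6 \<or> b7" using rin by (auto simp: Z_def)
  have t12: "R (b1 \<or> b2 \<or> b3 \<or> b4 \<or> b5 \<or> b6 \<or> b7) (W (8*j+6)) (W (6*j+5))"
    by (rule R_chain[OF s1 s2]) auto
  show ?thesis
    by (rule R_chain[OF t12 s3]) (use all in auto)
qed

lemma interp_W: "interp d M v (W n) x = interp d M v [Box, H] (interp d M v (replicate n One) (interp d M v [Box] x))"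
proof -
  have "W n = [Box, H] @ replicate n One @ [Box]" by (simp add: W_def)
  then show ?thesis by (simp only: interp_append)
qed

lemma final: False
proof -
  define P where "P n = interp d M v (replicate n One)" for n
  define F where "F = {..<d} \<times> {..d}"
  define f where "f n = (\<lambda>(a, b). if b < d then Lp d (M One) n a b else cp d (M One) (v One) n a)" for n
  have "finite F" by (simp add: F_def)
  then obtain g where g: "strict_mono g" "\<forall>k\<in>F. incseq (\<lambda>n. f (g n) k)"
    using dickson[of F f] by blast
  have g01: "g 0 < g 1" using g(1) by (simp add: strict_mono_def)
  have fle: "f (g 0) k \<le> f (g 1) k" if "k \<in> F" for k
    using g(2) that by (simp add: incseq_def)
  have L: "\<forall>a<d. \<forall>b<d. Lp d (M One) (g 0) a b \<le> Lp d (M One) (g 1) a b"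
  proof (intro allI impI)
    fix a b assume "a < d" "b < d"
    then have "(a, b) \<in> F" by (simp add: F_def)
    then show "Lp d (M One) (g 0) a b \<le> Lp d (M One) (g 1) a b" using fle \<open>b < d\<close> by (fastforce simp: f_def)
  qed
  have C: "\<forall>a<d. cp d (M One) (v One) (g 0) a \<le> cp d (M One) (v One) (g 1) a"
  proof (intro allI impI)
    fix a assume "a < d"
    then have "(a, d) \<in> F" by (simp add: F_def)
    then show "cp d (M One) (v One) (g 0) a \<le> cp d (M One) (v One) (g 1) a" using fle by (fastforce simp: f_def)
  qed
  have base: "gev d (P (g 1) x) (P (g 0) x)" for x
    unfolding P_def by (rule rep_le[where M=M and s=One and v=v, OF L C])
  define p where "p = g 1 - g 0"
  have p0: "p > 0" using g01 by (simp add: p_def)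
  have Padd: "P (a + b) x = P a (P b x)" for a b x
    unfolding P_def by (rule replicate_add_interp)
  have step: "gev d (P (n + p) x) (P n x)" if "n \<ge> g 0" for n x
  proof -
    have e1: "n + p = g 1 + (n - g 0)" using that g01 by (simp add: p_def)
    have e2: "n = g 0 + (n - g 0)" using that by simp
    have "gev d (P (g 1) (P (n - g 0) x)) (P (g 0) (P (n - g 0) x))" by (rule base)
    moreover have "P (n + p) x = P (g 1) (P (n - g 0) x)" unfolding e1 by (rule Padd)
    moreover have "P (g 0 + (n - g 0)) x = P (g 0) (P (n - g 0) x)" by (rule Padd)
    then have "P n x = P (g 0) (P (n - g 0) x)" using that by simp
    ultimately show ?thesis by simp
  qed
  have shift: "gev d (P (n + u*p) x) (P n x)" if "n \<ge> g 0" for n u x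
  proof (induction u)
    case 0 show ?case by (simp add: gev_refl)
  next
    case (Suc u)
    have A: "gev d (P ((n + u*p) + p) x) (P (n + u*p) x)" by (rule step) (use that in simp)
    have eq: "n + Suc u * p = (n + u*p) + p" by simp
    show ?case unfolding eq by (rule gev_trans[OF A Suc.IH])
  qed
  define u where "u = g 0 + 2"
  have up: "u * p \<ge> u" using p0 by simp
  define j where "j = u * p - 2"
  have ja: "8*j + 6 \<ge> g 0" using up by (simp add: j_def u_def)
  have jb: "9*j + 8 = (8*j + 6) + u*p" using up by (simp add: j_def u_def)
  define x :: "nat \<Rightarrow> nat" where "x = (\<lambda>_. 0)"
  have gt: "gtv d (interp d M v (W (8*j+6)) x) (interp d M v (W (9*j+8)) x)"
    using chain[of j] unfolding R_def by blast
  have ge: "gev d (interp d M v (W (9*j+8)) x) (interp d M v (W (8*j+6)) x)"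
    unfolding interp_W jb using shift[OF ja] unfolding P_def by (intro interp_gev) blast
  have "0 < d" using d1 by simp
  then have "interp d M v (W (8*j+6)) x 0 \<le> interp d M v (W (9*j+8)) x 0" using ge unfolding gev_def by blast
  moreover have "interp d M v (W (9*j+8)) x 0 < interp d M v (W (8*j+6)) x 0" using gt unfolding gtv_def by blast
  ultimately show False by simp
qed
end

theorem mainTheorem2:
  "\<not> (\<exists>(d::nat) (M :: sym \<Rightarrow> nat \<Rightarrow> nat \<Rightarrow> nat) (v :: sym \<Rightarrow> nat \<Rightarrow> nat).
        d \<ge> 1 \<and>
        (\<forall>\<sigma> x y. gtv d x y \<longrightarrow> gtv d (aff d (M \<sigma>) (v \<sigma>) x) (aff d (M \<sigma>) (v \<sigma>) y)) \<and>
        (\<exists>\<rho>\<in>set Z. (\<forall>x. gtv d (interp d M v (fst \<rho>) x) (interp d M v (snd \<rho>) x)) \<and>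
           (\<forall>\<rho>'\<in>set Z. \<rho>' \<noteq> \<rho> \<longrightarrow>
              (\<forall>x. gev d (interp d M v (fst \<rho>') x) (interp d M v (snd \<rho>') x)))))"
proof
  assume "\<exists>(d::nat) (M :: sym \<Rightarrow> nat \<Rightarrow> nat \<Rightarrow> nat) (v :: sym \<Rightarrow> nat \<Rightarrow> nat).
        d \<ge> 1 \<and>
        (\<forall>\<sigma> x y. gtv d x y \<longrightarrow> gtv d (aff d (M \<sigma>) (v \<sigma>) x) (aff d (M \<sigma>) (v \<sigma>) y)) \<and>
        (\<exists>\<rho>\<in>set Z. (\<forall>x. gtv d (interp d M v (fst \<rho>) x) (interp d M v (snd \<rho>) x)) \<and>
           (\<forall>\<rho>'\<in>set Z. \<rho>' \<noteq> \<rho> \<longrightarrow>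
              (\<forall>x. gev d (interp d M v (fst \<rho>') x) (interp d M v (snd \<rho>') x))))"
  then obtain d M v rho where "Zint d M v rho"
    unfolding Zint_def by blast
  then show False by (rule Zint.final)
qed

end
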